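(* Let $\alpha>0$, let $n\in\mathbb{N}$, and for $w\in\mathbb{D}$ and $i\in\mathbb{N}$ set $f_w^{[i]}(z)=\frac{z^i}{(1-\overline{w}z)^{\alpha+i}}$. Then there is a constant $C>0$ (independent of $w$ and of the scalars) such that for all non-zero complex scalars $c_0,c_1,\dots,c_n$ and all $w\in\mathbb{D}$ with $|w|>\frac12$, $$\left\|\sum_{i=0}^n c_if_w^{[i]}\right\|_{\mathcal{B}^{\alpha}}\ge C\sum_{i=0}^n|c_i|\,\|f_w^{[i]}\|_{\mathcal{B}^{\alpha}}.$$
   Context: $\mathbb{D}$ is the open unit disc in $\mathbb{C}$. For $\alpha>0$, $\mathcal{B}^{\alpha}$ is the space of analytic $f$ on $\mathbb{D}$ with $\|f\|_{\mathcal{B}^{\alpha}}=|f(0)|+\sup_{z\in\mathbb{D}}(1-|z|^2)^{\alpha}|f'(z)|<\infty$. *)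

theory Defs
  imports "HOL-Analysis.Analysis"
begin

definition bloch_norm :: "real \<Rightarrow> (complex \<Rightarrow> complex) \<Rightarrow> real" where
  "bloch_norm \<alpha> f = norm (f 0) +
     (SUP z\<in>ball 0 1. (1 - (norm z)\<^sup>2) powr \<alpha> * norm (deriv f z))"

text \<open>f_w^[i](z) = z^i / (1 - conj(w) z)^(alpha+i), principal branch
  (1 - conj w z has positive real part on the disc).\<close>
definition fw :: "real \<Rightarrow> complex \<Rightarrow> nat \<Rightarrow> complex \<Rightarrow> complex" where
  "fw \<alpha> w i z = z ^ i / (1 - cnj w * z) powr (complex_of_real (\<alpha> + real i))"

end

theory Submission
  imports Defs "HOL-Computational_Algebra.Polynomial"
begin


definition fd :: "real \<Rightarrow> complex \<Rightarrow> nat \<Rightarrow> complex \<Rightarrow> complex" where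
  "fd \<alpha> w i z = of_nat i * z^(i-1) * (1 - cnj w * z) powr (-(of_real (\<alpha> + real i)))
     + of_real (\<alpha> + real i) * cnj w * z^i * (1 - cnj w * z) powr (-(of_real (\<alpha> + real i)) - 1)"

lemma fw_alt: "fw \<alpha> w i = (\<lambda>z. z^i * (1 - cnj w * z) powr (-(of_real (\<alpha> + real i))))"
  by (rule ext, unfold fw_def powr_minus, simp add: divide_inverse)

lemma Re_X_pos:
  assumes "norm w < 1" "norm z < 1"
  shows "0 < Re (1 - cnj w * z)"
proof -
  have "\<bar>Re (cnj w * z)\<bar> \<le> norm (cnj w * z)" by (rule abs_Re_le_cmod)
  also have "\<dots> = norm w * norm z" by (simp add: norm_mult)
  also have "\<dots> < 1" using assms by (metis mult_le_one norm_ge_zero less_le_not_le mult_strict_mono' less_eq_real_def mult_1_left)  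
  finally show ?thesis by simp
qed

lemma fw_deriv:
  assumes "norm w < 1" "norm z < 1"
  shows "(fw \<alpha> w i has_field_derivative fd \<alpha> w i z) (at z)"
proof -
  define s where "s = -(of_real (\<alpha> + real i)::complex)"
  have nr: "1 - cnj w * z \<notin> \<real>\<^sub>\<le>\<^sub>0" using Re_X_pos[OF assms]
    by (auto simp: complex_nonpos_Reals_iff)
  have d1: "((\<lambda>z. 1 - cnj w * z) has_field_derivative (- cnj w)) (at z)"
    by (auto intro!: derivative_eq_intros)
  have d2: "((\<lambda>x. x powr s) has_field_derivative s * (1 - cnj w * z) powr (s-1)) (at (1 - cnj w * z))"
    by (rule has_field_derivative_powr[OF nr])
  have d3: "((\<lambda>z. (1 - cnj w * z) powr s) has_field_derivative (s * (1 - cnj w * z) powr (s-1)) * (- cnj w)) (at z)"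
    using DERIV_chain2[OF d2 d1] .
  have d4: "((\<lambda>z. z^i) has_field_derivative of_nat i * z^(i-1)) (at z)"
    using DERIV_power[OF DERIV_ident, of i z UNIV] by simp
  note d5 = DERIV_mult[OF d4 d3]
  show ?thesis unfolding fw_alt s_def[symmetric]
    apply (rule DERIV_cong[OF d5])
    apply (simp add: fd_def s_def algebra_simps)
    done
qed

lemma norm_X_facts:
  assumes "norm w < 1" "norm z < 1"
  shows "0 < norm (1 - cnj w * z)" "norm (1 - cnj w * z) \<le> 2"
    "1 - norm w \<le> norm (1 - cnj w * z)" "1 - norm z ^ 2 \<le> 2 * norm (1 - cnj w * z)"
proof -
  have p: "0 < Re (1 - cnj w * z)" by (rule Re_X_pos[OF assms])
  thus "0 < norm (1 - cnj w * z)" using complex_Re_le_cmod[of "1 - cnj w * z"] by linarith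
  have nwz: "norm (cnj w * z) = norm w * norm z" by (simp add: norm_mult)
  have wz1: "norm w * norm z \<le> norm w" using assms by (simp add: mult_left_le)
  have wz2: "norm w * norm z \<le> norm z" using assms by (simp add: mult_left_le_one_le)
  have "norm (1 - cnj w * z) \<le> norm (1::complex) + norm (cnj w * z)" by (rule norm_triangle_ineq4)
  thus "norm (1 - cnj w * z) \<le> 2" using nwz wz1 assms by simp
  have lo: "1 - norm w * norm z \<le> norm (1 - cnj w * z)"
    using norm_triangle_ineq2[of "1::complex" "cnj w * z"] nwz by simp
  thus "1 - norm w \<le> norm (1 - cnj w * z)" using wz1 by linarith
  have "1 - norm z ^ 2 \<le> 2 * (1 - norm z)"
  proof - 
    have "0 \<le> (1 - norm z)^2" by simp
    thus ?thesis by (simp add: power2_eq_square algebra_simps)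
  qed
  thus "1 - norm z ^ 2 \<le> 2 * norm (1 - cnj w * z)" using lo wz2 by (smt (verit))
qed

lemma fd_bound:
  assumes "norm w < 1" "norm z < 1" "\<alpha> > 0"
  shows "(1 - norm z ^ 2) powr \<alpha> * norm (fd \<alpha> w i z) \<le> 2 powr \<alpha> * (3 * real i + \<alpha>) / (1 - norm w) ^ (i + 1)"
proof -
  define X where "X = 1 - cnj w * z"
  define x where "x = norm X"
  define a where "a = \<alpha> + real i"
  note F = norm_X_facts[OF assms(1,2), folded X_def, folded x_def]
  have n1: "norm (X powr (-(of_real a))) = x powr (-a)"
    by (subst norm_powr_real_powr') (auto simp: x_def)
  have n2: "norm (X powr (-(of_real a) - 1)) = x powr (-a - 1)"
    by (subst norm_powr_real_powr') (auto simp: x_def)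
  have na: "norm (complex_of_real \<alpha> + of_nat i) = \<alpha> + real i"
  proof -
    have "complex_of_real \<alpha> + of_nat i = of_real (\<alpha> + real i)" by simp
    thus ?thesis using assms(3) by (simp only: norm_of_real)
  qed
  have zi1: "norm z ^ (i-1) \<le> 1" using assms by (simp add: power_le_one)
  have zi: "norm z ^ i \<le> 1" using assms by (simp add: power_le_one)
  have "norm (fd \<alpha> w i z) \<le> real i * norm z ^ (i-1) * x powr (-a) + a * norm w * norm z ^ i * x powr (-a - 1)"
    unfolding fd_def X_def[symmetric] a_def[symmetric]
    apply (rule order_trans[OF norm_triangle_ineq])
    apply (rule add_mono)
    using n1 n2 assms(3) by (auto simp: norm_mult norm_power a_def na)
  also have "\<dots> \<le> real i * x powr (-a) + a * x powr (-a - 1)"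
    apply (rule add_mono)
    subgoal using zi1 by (intro mult_right_mono) (auto simp: mult_left_le)
    subgoal using zi assms a_def
      by (intro mult_right_mono) (auto intro!: mult_le_one mult_left_le_one_le simp: mult.assoc)
    done
  also have "x powr (-a) = x * x powr (-a - 1)"
    using F(1) by (simp add: powr_add[symmetric] powr_mult_base)
  also have "real i * (x * x powr (-a - 1)) + a * x powr (-a - 1) \<le> (3 * real i + \<alpha>) * x powr (-a - 1)"
  proof -
    have "real i * (x * x powr (-a - 1)) \<le> real i * (2 * x powr (-a - 1))"
      using F(2) by (intro mult_left_mono mult_right_mono) auto
    thus ?thesis by (simp add: a_def algebra_simps)
  qed
  finally have nb: "norm (fd \<alpha> w i z) \<le> (3 * real i + \<alpha>) * x powr (-a - 1)" .
  have wb: "(1 - norm z ^ 2) powr \<alpha> \<le> 2 powr \<alpha> * x powr \<alpha>"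
  proof -
    have "0 \<le> 1 - norm z ^ 2" using assms by (simp add: abs_square_le_1 less_imp_le)
    hence "(1 - norm z ^ 2) powr \<alpha> \<le> (2 * x) powr \<alpha>" using F(4) assms(3) by (intro powr_mono2) auto
    thus ?thesis using F(1) by (simp add: powr_mult)
  qed
  have "(1 - norm z ^ 2) powr \<alpha> * norm (fd \<alpha> w i z) \<le> (2 powr \<alpha> * x powr \<alpha>) * ((3 * real i + \<alpha>) * x powr (-a - 1))"
    using wb nb assms(3) by (intro mult_mono) auto
  also have "\<dots> = 2 powr \<alpha> * (3 * real i + \<alpha>) * (x powr \<alpha> * x powr (-a - 1))" by simp
  also have "x powr \<alpha> * x powr (-a - 1) = x powr (- real (i + 1))"
    by (simp add: powr_add[symmetric] a_def algebra_simps)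
  also have "\<dots> = 1 / x ^ (i + 1)" by (simp only: powr_minus_divide powr_realpow[OF F(1)])
  also have "2 powr \<alpha> * (3 * real i + \<alpha>) * (1 / x ^ (i + 1)) \<le> 2 powr \<alpha> * (3 * real i + \<alpha>) / (1 - norm w) ^ (i + 1)"
  proof -
    have "(1 - norm w) ^ (i+1) \<le> x ^ (i+1)" using F(3) assms by (intro power_mono) auto
    moreover have "0 < (1 - norm w) ^ (i+1)" using assms by simp
    ultimately have "2 powr \<alpha> * (3 * real i + \<alpha>) / x ^ (i+1) \<le> 2 powr \<alpha> * (3 * real i + \<alpha>) / (1 - norm w) ^ (i + 1)"
      using assms F(1) by (intro divide_left_mono mult_pos_pos) auto
    thus ?thesis by simp
  qed
  finally show ?thesis .
qed

definition Kb :: "real \<Rightarrow> complex \<Rightarrow> nat \<Rightarrow> real" where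
  "Kb \<alpha> w i = 2 powr \<alpha> * (3 * real i + \<alpha>) / (1 - norm w) ^ (i + 1)"

lemma bloch_fw_le:
  assumes "norm w < 1" "\<alpha> > 0"
  shows "bloch_norm \<alpha> (fw \<alpha> w i) \<le> 1 + Kb \<alpha> w i"
proof -
  have a: "norm (fw \<alpha> w i 0) \<le> 1" by (simp add: fw_def power_0_left)
  have b: "(SUP z\<in>ball 0 1. (1 - (norm z)\<^sup>2) powr \<alpha> * norm (deriv (fw \<alpha> w i) z)) \<le> Kb \<alpha> w i"
  proof (rule cSUP_least)
    fix z :: complex assume "z \<in> ball 0 1"
    hence z: "norm z < 1" by simp
    have "deriv (fw \<alpha> w i) z = fd \<alpha> w i z" by (rule DERIV_imp_deriv[OF fw_deriv[OF assms(1) z]])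
    thus "(1 - (norm z)\<^sup>2) powr \<alpha> * norm (deriv (fw \<alpha> w i) z) \<le> Kb \<alpha> w i"
      using fd_bound[OF assms(1) z assms(2)] by (simp add: Kb_def)
  qed simp
  show ?thesis unfolding bloch_norm_def using a b by linarith
qed

lemma g_deriv:
  assumes "norm w < 1" "norm z < 1"
  shows "((\<lambda>z. \<Sum>i\<le>n. c i * fw \<alpha> w i z) has_field_derivative (\<Sum>i\<le>n. c i * fd \<alpha> w i z)) (at z)"
  by (intro DERIV_sum DERIV_cmult fw_deriv assms)

lemma bloch_g_ge:
  assumes "norm w < 1" "norm z < 1" "\<alpha> > 0"
  shows "(1 - norm z ^ 2) powr \<alpha> * norm (\<Sum>i\<le>n. c i * fd \<alpha> w i z) \<le> bloch_norm \<alpha> (\<lambda>z. \<Sum>i\<le>n. c i * fw \<alpha> w i z)"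
proof -
  let ?g = "\<lambda>z. \<Sum>i\<le>n. c i * fw \<alpha> w i z"
  have dg: "\<And>z. norm z < 1 \<Longrightarrow> deriv ?g z = (\<Sum>i\<le>n. c i * fd \<alpha> w i z)"
    by (rule DERIV_imp_deriv[OF g_deriv[OF assms(1)]])
  have bd: "(1 - norm z ^ 2) powr \<alpha> * norm (\<Sum>i\<le>n. c i * fd \<alpha> w i z) \<le> (\<Sum>i\<le>n. norm (c i) * Kb \<alpha> w i)"
    if z: "norm z < 1" for z
  proof -
    have "(1 - norm z ^ 2) powr \<alpha> * norm (\<Sum>i\<le>n. c i * fd \<alpha> w i z) \<le> (1 - norm z ^ 2) powr \<alpha> * (\<Sum>i\<le>n. norm (c i) * norm (fd \<alpha> w i z))"
      by (intro mult_left_mono order_trans[OF norm_sum]) (auto simp: norm_mult)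
    also have "\<dots> = (\<Sum>i\<le>n. norm (c i) * ((1 - norm z ^ 2) powr \<alpha> * norm (fd \<alpha> w i z)))"
      by (simp add: sum_distrib_left mult_ac)
    also have "\<dots> \<le> (\<Sum>i\<le>n. norm (c i) * Kb \<alpha> w i)"
      using fd_bound[OF assms(1) z assms(3)] by (intro sum_mono mult_left_mono) (auto simp: Kb_def)
    finally show ?thesis .
  qed
  have "(1 - norm z ^ 2) powr \<alpha> * norm (deriv ?g z) \<le> (SUP z\<in>ball 0 1. (1 - (norm z)\<^sup>2) powr \<alpha> * norm (deriv ?g z))"
  proof (rule cSUP_upper)
    show "z \<in> ball 0 1" using assms by simp
    show "bdd_above ((\<lambda>z. (1 - (norm z)\<^sup>2) powr \<alpha> * norm (deriv ?g z)) ` ball 0 1)"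
      by (rule bdd_aboveI2[where M="\<Sum>i\<le>n. norm (c i) * Kb \<alpha> w i"]) (use bd dg in auto)
  qed
  thus ?thesis unfolding bloch_norm_def using dg[OF assms(2)] by (simp add: add_increasing)
qed



definition nd :: "nat \<Rightarrow> nat \<Rightarrow> complex" where
  "nd n j = complex_of_real (1 - real j / (4 * (real n + 1)))"

lemma nd_inj: "nd n j = nd n l \<Longrightarrow> j = l"
  by (simp only: nd_def of_real_eq_iff) (simp add: field_simps)

definition LB :: "nat \<Rightarrow> nat \<Rightarrow> complex poly" where
  "LB n j = smult (inverse (\<Prod>l\<in>{..n}-{j}. (nd n j - nd n l))) (\<Prod>l\<in>{..n}-{j}. [:- nd n l, 1:])"

lemma LB_poly: "j \<le> n \<Longrightarrow> m \<le> n \<Longrightarrow> poly (LB n j) (nd n m) = (if m = j then 1 else 0)"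
proof -
  assume j: "j \<le> n" and m: "m \<le> n"
  show ?thesis
  proof (cases "m = j")
    case True
    have "(\<Prod>l\<in>{..n}-{j}. (nd n j - nd n l)) \<noteq> 0"
      using nd_inj by (auto simp: prod_zero_iff)
    thus ?thesis using True by (simp add: LB_def poly_prod)
  next
    case False
    hence "(\<Prod>l\<in>{..n}-{j}. poly [:- nd n l, 1:] (nd n m)) = 0"
      using m False by (intro prod_zero) (auto intro!: bexI[of _ m])
    thus ?thesis using False by (simp add: LB_def poly_prod)
  qed
qed

lemma LB_degree: "degree (LB n j) \<le> n" if "j \<le> n"
proof -
  have "degree (\<Prod>l\<in>{..n}-{j}. [:- nd n l, 1:]) \<le> sum (degree \<circ> (\<lambda>l. [:- nd n l, 1:])) ({..n}-{j})"
    by (rule degree_prod_sum_le) simp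
  also have "\<dots> = card ({..n}-{j})" by simp
  also have "\<dots> \<le> n" using that by (auto simp: card_Diff_singleton)
  finally show ?thesis unfolding LB_def using degree_smult_le order_trans by blast
qed

lemma interp:
  fixes T :: "complex poly"
  assumes "degree T \<le> n"
  shows "T = (\<Sum>j\<le>n. smult (poly T (nd n j)) (LB n j))"
proof (rule poly_eqI_degree[where A="nd n ` {..n}"])
  have cA: "card (nd n ` {..n}) = n + 1"
    by (subst card_image) (auto intro: inj_onI nd_inj)
  show "degree T < card (nd n ` {..n})" using assms cA by simp
  have "degree (\<Sum>j\<le>n. smult (poly T (nd n j)) (LB n j)) \<le> n"
    by (intro degree_sum_le) (auto intro!: order_trans[OF degree_smult_le] LB_degree)
  thus "degree (\<Sum>j\<le>n. smult (poly T (nd n j)) (LB n j)) < card (nd n ` {..n})" using cA by simp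
  fix x assume "x \<in> nd n ` {..n}"
  then obtain m where m: "m \<le> n" "x = nd n m" by auto
  have "poly (\<Sum>j\<le>n. smult (poly T (nd n j)) (LB n j)) x = (\<Sum>j\<le>n. poly T (nd n j) * (if m = j then 1 else 0))"
    using m by (simp add: poly_sum LB_poly)
  also have "\<dots> = poly T x" proof -
    have "(\<Sum>j\<le>n. poly T (nd n j) * (if m = j then 1 else 0)) = (\<Sum>j\<le>n. if m = j then poly T (nd n j) else 0)"
      by (intro sum.cong) auto
    also have "\<dots> = poly T (nd n m)" using m by (simp add: sum.delta')
    finally show ?thesis using m by simp
  qed
  finally show "poly T x = poly (\<Sum>j\<le>n. smult (poly T (nd n j)) (LB n j)) x" by simp
qed

lemma lagrange_equiv:
  "\<exists>M>0. \<forall>T::complex poly. degree T \<le> n \<longrightarrow>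
     (\<Sum>k\<le>n. norm (coeff T k)) \<le> M * (\<Sum>j\<le>n. norm (poly T (nd n j)))"
proof -
  define B where "B = (\<Sum>j\<le>n. \<Sum>k\<le>n. norm (coeff (LB n j) k))"
  have Bge: "norm (coeff (LB n j) k) \<le> B" if "j \<le> n" "k \<le> n" for j k
  proof -
    have "norm (coeff (LB n j) k) \<le> (\<Sum>k\<le>n. norm (coeff (LB n j) k))"
      using that by (intro member_le_sum) auto
    also have "\<dots> \<le> B" unfolding B_def using that
      by (intro member_le_sum[where f="\<lambda>j. \<Sum>k\<le>n. norm (coeff (LB n j) k)"]) (auto intro: sum_nonneg)
    finally show ?thesis .
  qed
  have B0: "0 \<le> B" unfolding B_def by (intro sum_nonneg) auto
  show ?thesis
  proof (intro exI[of _ "(real n + 1) * B + 1"] conjI allI impI)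
    show "0 < (real n + 1) * B + 1" using B0 by (simp add: add_nonneg_pos)
    fix T :: "complex poly" assume dT: "degree T \<le> n"
    define S where "S = (\<Sum>j\<le>n. norm (poly T (nd n j)))"
    have S0: "0 \<le> S" unfolding S_def by (intro sum_nonneg) auto
    have ck: "norm (coeff T k) \<le> B * S" if k: "k \<le> n" for k
    proof -
      have "coeff T k = (\<Sum>j\<le>n. poly T (nd n j) * coeff (LB n j) k)"
        by (subst interp[OF dT]) (simp add: coeff_sum)
      hence "norm (coeff T k) \<le> (\<Sum>j\<le>n. norm (poly T (nd n j)) * norm (coeff (LB n j) k))"
        by (metis (no_types, lifting) norm_mult norm_sum sum.cong)
      also have "\<dots> \<le> (\<Sum>j\<le>n. norm (poly T (nd n j)) * B)"
        using Bge k by (intro sum_mono mult_left_mono) auto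
      also have "\<dots> = B * S" by (simp add: S_def sum_distrib_left mult_ac)
      finally show ?thesis .
    qed
    have "(\<Sum>k\<le>n. norm (coeff T k)) \<le> (\<Sum>k\<le>n. B * S)" using ck by (intro sum_mono) auto
    also have "\<dots> = (real n + 1) * B * S" by simp
    also have "\<dots> \<le> ((real n + 1) * B + 1) * S" using S0 by (simp add: algebra_simps)
    finally show "(\<Sum>k\<le>n. norm (coeff T k)) \<le> ((real n + 1) * B + 1) * S" .
  qed
qed



definition Pc :: "(nat \<Rightarrow> complex) \<Rightarrow> nat \<Rightarrow> complex poly" where
  "Pc c n = (\<Sum>i\<le>n. monom (c i) i)"

lemma pderiv_sum': "pderiv (sum f A) = (\<Sum>x\<in>A. pderiv (f x))"
  using higher_pderiv_sum[where n=1] by simp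

lemma poly_Pc: "poly (Pc c n) u = (\<Sum>i\<le>n. c i * u^i)"
  by (simp add: Pc_def poly_sum poly_monom)

lemma poly_pderiv_Pc: "poly (pderiv (Pc c n)) u = (\<Sum>i\<le>n. c i * of_nat i * u^(i-1))"
  by (simp add: Pc_def pderiv_sum' pderiv_monom poly_sum poly_monom mult_ac)

lemma degree_Pc: "degree (Pc c n) \<le> n"
  unfolding Pc_def by (intro degree_sum_le) (auto intro: order_trans[OF degree_monom_le])

lemma fd_special:
  assumes "1 - cnj w * z = complex_of_real \<rho>" "\<rho> > 0"
  shows "fd \<alpha> w i z = of_real (\<rho> powr (-\<alpha>-1)) * (of_nat i * (z / of_real \<rho>)^(i-1) + of_real (\<alpha> + real i) * cnj w * (z / of_real \<rho>)^i)"
proof -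
  have e1: "(1 - cnj w * z) powr (-(of_real (\<alpha> + real i))) = of_real (\<rho> powr (-\<alpha>-1) * \<rho> / \<rho>^i)"
  proof -
    have "(1 - cnj w * z) powr (-(of_real (\<alpha> + real i))) = of_real (\<rho> powr (-(\<alpha> + real i)))"
      using assms by (simp add: powr_of_real[symmetric])
    also have "\<rho> powr (-(\<alpha> + real i)) = \<rho> powr (-\<alpha>-1) * \<rho> powr 1 / \<rho> powr (real i)"
    proof -
      have "-(\<alpha> + real i) = (-\<alpha>-1) + 1 - real i" by simp
      thus ?thesis by (metis powr_add powr_diff)
    qed
    also have "\<dots> = \<rho> powr (-\<alpha>-1) * \<rho> / \<rho>^i" using assms by (simp add: powr_realpow)
    finally show ?thesis .
  qed
  have e2: "(1 - cnj w * z) powr (-(of_real (\<alpha> + real i)) - 1) = of_real (\<rho> powr (-\<alpha>-1) / \<rho>^i)"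
  proof -
    have "(1 - cnj w * z) powr (-(of_real (\<alpha> + real i)) - 1) = of_real (\<rho> powr (-(\<alpha> + real i) - 1))"
      using assms by (simp add: powr_of_real[symmetric])
    also have "\<rho> powr (-(\<alpha> + real i) - 1) = \<rho> powr (-\<alpha>-1) / \<rho> powr (real i)"
      by (simp add: powr_diff[symmetric] algebra_simps)
    also have "\<dots> = \<rho> powr (-\<alpha>-1) / \<rho>^i" using assms by (simp add: powr_realpow)
    finally show ?thesis .
  qed
  show ?thesis
  proof (cases i)
    case 0
    then show ?thesis unfolding fd_def e1 e2 by simp
  next
    case (Suc m)
    then show ?thesis unfolding fd_def e1 e2 using assms(2)
      by (simp add: power_divide field_simps)
  qed
qed

lemma fd_sum_special:
  assumes "1 - cnj w * z = complex_of_real \<rho>" "\<rho> > 0"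
  shows "(\<Sum>i\<le>n. c i * fd \<alpha> w i z) = of_real (\<rho> powr (-\<alpha>-1)) *
     (of_real \<alpha> * cnj w * poly (Pc c n) (z / of_real \<rho>) + (1 + cnj w * (z / of_real \<rho>)) * poly (pderiv (Pc c n)) (z / of_real \<rho>))"
proof -
  define u where "u = z / of_real \<rho>"
  have t: "c i * (of_nat i * u^(i-1) + of_real (\<alpha> + real i) * cnj w * u^i)
     = of_real \<alpha> * cnj w * (c i * u^i) + (1 + cnj w * u) * (c i * of_nat i * u^(i-1))" for i
    by (cases i) (auto simp: algebra_simps)
  define R where "R = complex_of_real (\<rho> powr (-\<alpha>-1))"
  have "(\<Sum>i\<le>n. c i * fd \<alpha> w i z) = (\<Sum>i\<le>n. R * (c i * (of_nat i * u^(i-1) + of_real (\<alpha> + real i) * cnj w * u^i)))"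
    unfolding fd_special[OF assms] u_def[symmetric] R_def by (simp add: mult_ac)
  also have "\<dots> = R * (\<Sum>i\<le>n. of_real \<alpha> * cnj w * (c i * u^i) + (1 + cnj w * u) * (c i * of_nat i * u^(i-1)))"
    by (simp only: t sum_distrib_left)
  also have "\<dots> = R * (of_real \<alpha> * cnj w * (\<Sum>i\<le>n. c i * u^i) + (1 + cnj w * u) * (\<Sum>i\<le>n. c i * of_nat i * u^(i-1)))"
    by (simp add: sum.distrib sum_distrib_left)
  finally show ?thesis unfolding poly_Pc poly_pderiv_Pc u_def R_def .
qed

definition Rp :: "(nat \<Rightarrow> complex) \<Rightarrow> nat \<Rightarrow> complex \<Rightarrow> real \<Rightarrow> complex poly" where
  "Rp c n w t = pcompose (Pc c n) [:-1/cnj w, 1/(cnj w * of_real t):]"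

definition Tp :: "real \<Rightarrow> complex poly \<Rightarrow> complex poly" where
  "Tp \<alpha> R = smult (of_real \<alpha>) R + pCons 0 (pderiv R)"

lemma degree_Rp: "degree (Rp c n w t) \<le> n"
proof -
  have "degree (Rp c n w t) \<le> degree (Pc c n) * degree [:-1/cnj w, 1/(cnj w * of_real t):]"
    unfolding Rp_def by (rule degree_pcompose_le)
  also have "\<dots> \<le> n * 1"
    by (intro mult_le_mono degree_Pc) (auto intro: order_trans[OF degree_pCons_le])
  finally show ?thesis by simp
qed

lemma coeff_Tp: "coeff (Tp \<alpha> R) k = (of_real \<alpha> + of_nat k) * coeff R k"
  by (cases k) (auto simp: Tp_def coeff_pderiv algebra_simps)

lemma degree_Tp: "degree R \<le> n \<Longrightarrow> degree (Tp \<alpha> R) \<le> n"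
  by (intro degree_le) (auto simp: coeff_Tp coeff_eq_0)

lemma poly_Tp: "poly (Tp \<alpha> R) y = of_real \<alpha> * poly R y + y * poly (pderiv R) y"
  by (simp add: Tp_def)

lemma key_identity:
  assumes "w \<noteq> 0" "t \<noteq> 0" "u = (y - of_real t) / (cnj w * of_real t)"
  shows "of_real \<alpha> * cnj w * poly (Pc c n) u + (1 + cnj w * u) * poly (pderiv (Pc c n)) u
     = cnj w * poly (Tp \<alpha> (Rp c n w t)) y"
proof -
  have q: "poly [:-1/cnj w, 1/(cnj w * of_real t):] y = u"
    using assms by (simp add: field_simps)
  have r0: "poly (Rp c n w t) y = poly (Pc c n) u"
    unfolding Rp_def poly_pcompose q ..
  have r1: "poly (pderiv (Rp c n w t)) y = poly (pderiv (Pc c n)) u * (1/(cnj w * of_real t))"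
  proof -
    have pq: "pderiv [:-1/cnj w, 1/(cnj w * of_real t):] = [:1/(cnj w * of_real t):]" by (simp add: pderiv_pCons)
    show ?thesis unfolding Rp_def pderiv_pcompose poly_mult poly_pcompose q pq by simp
  qed
  have y_eq: "y = of_real t + u * (cnj w * of_real t)" using assms by (simp add: field_simps)
  have w0: "cnj w \<noteq> 0" "complex_of_real t \<noteq> 0" using assms by auto
  show ?thesis unfolding poly_Tp r0 r1 using w0 by (subst y_eq) (simp add: field_simps)
qed

lemma coeff_bound:
  assumes "w \<noteq> 0" "norm w \<le> 1" "0 < t" "t \<le> 1" "i \<le> n"
  shows "norm (c i) \<le> t^i * 2^n * (\<Sum>k\<le>n. norm (coeff (Rp c n w t) k))"
proof -
  define R where "R = Rp c n w t"
  define r where "r = (\<lambda>k. coeff R k)"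
  define d where "d = (\<lambda>i. \<Sum>k\<le>n. r k * of_real t ^ k * of_nat (k choose i) * cnj w ^ i)"
  have polyR: "poly R y = (\<Sum>k\<le>n. r k * y ^ k)" for y
  proof -
    have "poly R y = (\<Sum>k\<le>degree R. r k * y ^ k)" by (simp add: poly_altdef r_def)
    also have "\<dots> = (\<Sum>k\<le>n. r k * y ^ k)"
      using degree_Rp[of c n w t]
      by (intro sum.mono_neutral_left) (auto simp: r_def R_def coeff_eq_0)
    finally show ?thesis .
  qed
  have PR: "poly (Pc c n) u = poly R (of_real t + cnj w * of_real t * u)" for u
  proof -
    have "(of_real t + cnj w * of_real t * u - of_real t) / (cnj w * of_real t) = u"
      using assms by (simp add: field_simps)
    thus ?thesis unfolding R_def Rp_def poly_pcompose
      using assms by (simp add: field_simps)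
  qed
  have binom: "(1 + x) ^ k = (\<Sum>i\<le>n. of_nat (k choose i) * x ^ i)" if "k \<le> n" for k and x :: complex
  proof -
    have "(1 + x) ^ k = (x + 1) ^ k" by (simp add: add.commute)
    also have "\<dots> = (\<Sum>i\<le>k. of_nat (k choose i) * x ^ i)" by (simp add: binomial_ring)
    also have "\<dots> = (\<Sum>i\<le>n. of_nat (k choose i) * x ^ i)"
      using that by (intro sum.mono_neutral_left) auto
    finally show ?thesis .
  qed
  have Pd: "poly (Pc c n) u = (\<Sum>i\<le>n. d i * u ^ i)" for u
  proof -
    have "poly (Pc c n) u = (\<Sum>k\<le>n. r k * (of_real t * (1 + cnj w * u)) ^ k)"
      unfolding PR polyR by (simp add: algebra_simps)
    also have "\<dots> = (\<Sum>k\<le>n. \<Sum>i\<le>n. r k * of_real t ^ k * (of_nat (k choose i) * (cnj w * u) ^ i))"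
      by (intro sum.cong refl) (simp add: power_mult_distrib binom sum_distrib_left mult_ac)
    also have "\<dots> = (\<Sum>i\<le>n. \<Sum>k\<le>n. r k * of_real t ^ k * (of_nat (k choose i) * (cnj w * u) ^ i))"
      by (rule sum.swap)
    also have "\<dots> = (\<Sum>i\<le>n. d i * u ^ i)"
      unfolding d_def sum_distrib_right by (intro sum.cong refl) (simp add: power_mult_distrib mult_ac)
    finally show ?thesis .
  qed
  have "Pc c n = (\<Sum>j\<le>n. monom (d j) j)"
    by (subst poly_eq_poly_eq_iff[symmetric]) (simp add: Pd poly_sum poly_monom fun_eq_iff)
  hence "coeff (Pc c n) i = coeff (\<Sum>j\<le>n. monom (d j) j) i" by simp
  hence ci: "c i = d i" using assms(5) by (simp add: Pc_def coeff_sum coeff_monom)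
  have "norm (d i) \<le> (\<Sum>k\<le>n. norm (r k * of_real t ^ k * of_nat (k choose i) * cnj w ^ i))"
    unfolding d_def by (rule norm_sum)
  also have "\<dots> \<le> (\<Sum>k\<le>n. norm (r k) * (t^i * 2^n))"
  proof (intro sum_mono)
    fix k assume k: "k \<in> {..n}"
    show "norm (r k * of_real t ^ k * of_nat (k choose i) * cnj w ^ i) \<le> norm (r k) * (t^i * 2^n)"
    proof (cases "i \<le> k")
      case True
      have "t ^ k \<le> t ^ i" using True assms by (intro power_decreasing) auto
      moreover have "real (k choose i) \<le> 2 ^ n"
      proof -
        have "k choose i \<le> 2 ^ k" by (rule binomial_le_pow2)
        also have "(2::nat) ^ k \<le> 2 ^ n" using k by (intro power_increasing) auto
        finally show ?thesis by (simp flip: of_nat_le_iff)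
      qed
      moreover have "norm w ^ i \<le> 1" using assms by (simp add: power_le_one)
      ultimately have "t ^ k * real (k choose i) * norm w ^ i \<le> t ^ i * 2 ^ n * 1"
        using assms by (intro mult_mono) auto
      thus ?thesis by (simp add: norm_mult norm_power mult_left_mono mult_ac abs_of_pos[OF assms(3)])
        (metis mult.assoc mult_left_mono norm_ge_zero mult.commute)
    next
      case False
      hence kc: "k choose i = 0" by (simp add: binomial_eq_0)
      show ?thesis using assms by (simp only: kc) simp
    qed
  qed
  also have "\<dots> = t^i * 2^n * (\<Sum>k\<le>n. norm (coeff (Rp c n w t) k))"
    by (simp add: sum_distrib_left sum_distrib_right r_def R_def mult_ac)
  finally show ?thesis using ci by simp
qed



lemma lower_point:
  assumes a: "\<alpha> > 0" and w1: "1/2 < norm w" and w2: "norm w < 1" and j: "j \<le> n"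
  shows "3/8 * 2 powr (-\<alpha>) * norm (poly (Tp \<alpha> (Rp c n w (1 - norm w ^ 2))) (nd n j)) / (1 - norm w ^ 2)
    \<le> bloch_norm \<alpha> (\<lambda>z. \<Sum>i\<le>n. c i * fw \<alpha> w i z)"
proof -
  define s where "s = norm w"
  define t where "t = 1 - s^2"
  define y where "y = 1 - real j / (4 * (real n + 1))"
  define \<rho> where "\<rho> = t / y"
  define z where "z = w * of_real ((1 - \<rho>) / s^2)"
  have s: "1/2 < s" "s < 1" using w1 w2 by (auto simp: s_def)
  have w0: "w \<noteq> 0" using s s_def by auto
  have t: "0 < t" "t < 3/4"
  proof -
    have "s * s < 1 * 1" using s by (intro mult_strict_mono) auto
    thus "0 < t" by (simp add: t_def power2_eq_square)
    have "(1/2) * (1/2) < s * s" using s by (intro mult_strict_mono) auto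
    thus "t < 3/4" by (simp add: t_def power2_eq_square)
  qed
  have y: "3/4 \<le> y" "y \<le> 1"
  proof -
    have "real j / (4 * (real n + 1)) \<le> 1/4" using j by (simp add: field_simps)
    thus "3/4 \<le> y" by (simp add: y_def)
    show "y \<le> 1" by (simp add: y_def)
  qed
  have ndj: "nd n j = of_real y" by (simp add: nd_def y_def)
  have rho: "0 < \<rho>" "t \<le> \<rho>" "\<rho> < 1"
    using t y unfolding \<rho>_def by (auto simp: field_simps)
  have cw: "cnj w * w = of_real (s^2)" by (metis complex_norm_square mult.commute s_def)
  have Xz: "1 - cnj w * z = of_real \<rho>"
  proof -
    have "cnj w * z = (cnj w * w) * of_real ((1 - \<rho>) / s^2)" by (simp add: z_def mult.assoc)
    also have "\<dots> = of_real (1 - \<rho>)" using s by (simp only: cw of_real_mult[symmetric]) simp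
    finally show ?thesis by simp
  qed
  have nz: "norm z = (1 - \<rho>) / s"
  proof -
    have "norm z = s * \<bar>(1 - \<rho>) / s^2\<bar>" unfolding z_def norm_mult norm_of_real s_def ..
    also have "\<dots> = (1 - \<rho>) / s" using rho s by (simp add: power2_eq_square)
    finally show ?thesis .
  qed
  have nzs: "norm z \<le> s"
  proof -
    have "1 - \<rho> \<le> s * s" using rho t_def by (simp add: power2_eq_square)
    thus ?thesis using nz s by (simp add: divide_le_eq)
  qed
  hence z1: "norm z < 1" using s by simp
  have rho_eq: "\<rho> = 1 - s * norm z" using nz s by (simp add: field_simps)
  have wz: "\<rho> / 2 \<le> 1 - norm z ^ 2"
  proof -
    have "norm z * (2 - s) \<le> s * (2 - s)" using nzs s by (intro mult_right_mono) auto
    also have "s * (2 - s) \<le> 1"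
    proof -
      have "0 \<le> (1 - s)^2" by simp
      thus ?thesis by (simp add: power2_eq_square algebra_simps)
    qed
    finally have "norm z * (2 - s) \<le> 1" .
    moreover have "norm z ^ 2 \<le> norm z" using z1 by (simp add: power2_eq_square mult_left_le_one_le)
    ultimately show ?thesis using rho_eq by (simp add: algebra_simps)
  qed
  define u where "u = z / of_real \<rho>"
  have u_eq: "u = (of_real y - of_real t) / (cnj w * of_real t)"
  proof -
    have yt: "y = t / \<rho>" using rho y by (simp add: \<rho>_def field_simps)
    have "of_real s ^ 2 * u = w * (cnj w * u)" using cw by (simp add: power2_eq_square mult_ac)
    have "cnj w * of_real t * u = cnj w * of_real t * (w * of_real ((1 - \<rho>) / s^2)) / of_real \<rho>"
      by (simp add: u_def z_def)
    also have "\<dots> = (cnj w * w) * of_real t * of_real ((1 - \<rho>) / s^2) / of_real \<rho>" by (simp add: mult_ac)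
    also have "\<dots> = of_real (s^2 * t * ((1 - \<rho>) / s^2) / \<rho>)" unfolding cw by simp
    also have "s^2 * t * ((1 - \<rho>) / s^2) / \<rho> = y - t" using s rho yt by (simp add: field_simps)
    finally have "cnj w * of_real t * u = of_real y - of_real t" by simp
    thus ?thesis using w0 t by (auto simp: eq_divide_eq mult_ac)
  qed
  let ?T = "poly (Tp \<alpha> (Rp c n w t)) (nd n j)"
  have sum_eq: "(\<Sum>i\<le>n. c i * fd \<alpha> w i z) = of_real (\<rho> powr (-\<alpha>-1)) * (cnj w * ?T)"
    unfolding fd_sum_special[OF Xz rho(1)] u_def[symmetric] ndj
    by (subst key_identity[OF w0 _ u_eq]) (use t in auto)
  have nsum: "norm (\<Sum>i\<le>n. c i * fd \<alpha> w i z) = \<rho> powr (-\<alpha>-1) * s * norm ?T"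
    unfolding sum_eq by (simp add: norm_mult s_def)
  have "(\<rho> / 2) powr \<alpha> \<le> (1 - norm z ^ 2) powr \<alpha>" using wz rho a by (intro powr_mono2) auto
  hence "(\<rho> / 2) powr \<alpha> * (\<rho> powr (-\<alpha>-1) * s * norm ?T) \<le> (1 - norm z ^ 2) powr \<alpha> * norm (\<Sum>i\<le>n. c i * fd \<alpha> w i z)"
    unfolding nsum using s by (intro mult_right_mono) auto
  also have "\<dots> \<le> bloch_norm \<alpha> (\<lambda>z. \<Sum>i\<le>n. c i * fw \<alpha> w i z)"
    by (rule bloch_g_ge[OF w2 z1 a])
  finally have G: "(\<rho> / 2) powr \<alpha> * (\<rho> powr (-\<alpha>-1) * s * norm ?T) \<le> bloch_norm \<alpha> (\<lambda>z. \<Sum>i\<le>n. c i * fw \<alpha> w i z)" .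
  have "(\<rho> / 2) powr \<alpha> * (\<rho> powr (-\<alpha>-1) * s * norm ?T) = 2 powr (-\<alpha>) * (\<rho> powr \<alpha> * \<rho> powr (-\<alpha>-1)) * s * norm ?T"
    using rho by (simp add: powr_divide powr_minus_divide)
  also have "\<rho> powr \<alpha> * \<rho> powr (-\<alpha>-1) = 1 / \<rho>"
    using rho by (simp add: powr_add[symmetric] powr_minus_divide)
  also have "1 / \<rho> = y / t" using rho t y by (simp add: \<rho>_def)
  finally have G2: "2 powr (-\<alpha>) * (y / t) * s * norm ?T \<le> bloch_norm \<alpha> (\<lambda>z. \<Sum>i\<le>n. c i * fw \<alpha> w i z)"
    using G by simp
  have "3/8 * 2 powr (-\<alpha>) * norm ?T / t \<le> 2 powr (-\<alpha>) * (y / t) * s * norm ?T"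
  proof -
    have "(3/4) * (1/2) \<le> y * s" using y s by (intro mult_mono) auto
    hence "3/8 * (2 powr (-\<alpha>) * norm ?T / t) \<le> (y * s) * (2 powr (-\<alpha>) * norm ?T / t)"
      using t by (intro mult_right_mono) auto
    thus ?thesis by (simp add: field_simps)
  qed
  with G2 show ?thesis by (simp add: t_def s_def)
qed



lemma upper_fw:
  assumes a: "\<alpha> > 0" and w1: "1/2 < norm w" and w2: "norm w < 1" and i: "i \<le> n"
  shows "bloch_norm \<alpha> (fw \<alpha> w i) \<le> (1 + 2 powr \<alpha> * (3 * real n + \<alpha>)) * 2^(n+1) / (1 - norm w ^ 2)^(i+1)"
proof -
  define s where "s = norm w"
  define t where "t = 1 - s^2"
  have s: "1/2 < s" "s < 1" using w1 w2 by (auto simp: s_def)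
  have t0: "0 < t" "t \<le> 1"
  proof -
    have "s * s < 1 * 1" using s by (intro mult_strict_mono) auto
    thus "0 < t" by (simp add: t_def power2_eq_square)
    show "t \<le> 1" by (simp add: t_def)
  qed
  have ts: "t / 2 \<le> 1 - s"
  proof -
    have "0 \<le> (1 - s)^2" by simp
    hence h: "1 - s^2 \<le> 2 * (1 - s)" by (simp add: power2_eq_square algebra_simps)
    have "(1 - s^2) / 2 \<le> (2 * (1 - s)) / 2" using h by (rule divide_right_mono) simp
    thus ?thesis unfolding t_def by simp
  qed
  have p: "1 / (1 - s)^(i+1) \<le> (2 / t)^(i+1)"
  proof -
    have "(t/2)^(i+1) \<le> (1 - s)^(i+1)" using ts t0 by (intro power_mono) auto
    hence "1 / (1 - s)^(i+1) \<le> 1 / (t/2)^(i+1)" using t0 s by (intro divide_left_mono mult_pos_pos zero_less_power) auto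
    thus ?thesis by (simp add: power_divide)
  qed
  have one: "1 \<le> (2 / t)^(i+1)" using t0 by (intro one_le_power) (simp add: field_simps)
  have p2: "(2 / t)^(i+1) \<le> 2^(n+1) / t^(i+1)"
  proof -
    have "(2::real)^(i+1) \<le> 2^(n+1)" using i by (intro power_increasing) auto
    thus ?thesis using t0 by (simp add: power_divide divide_right_mono)
  qed
  have K: "2 powr \<alpha> * (3 * real i + \<alpha>) \<le> 2 powr \<alpha> * (3 * real n + \<alpha>)"
    using i by (intro mult_left_mono) auto
  have "bloch_norm \<alpha> (fw \<alpha> w i) \<le> 1 + Kb \<alpha> w i" by (rule bloch_fw_le[OF w2 a])
  also have "Kb \<alpha> w i = 2 powr \<alpha> * (3 * real i + \<alpha>) * (1 / (1 - s)^(i+1))" by (simp add: Kb_def s_def)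
  also have "\<dots> \<le> 2 powr \<alpha> * (3 * real n + \<alpha>) * (2 / t)^(i+1)"
    using K p a s by (intro mult_mono) auto
  also have "1 + 2 powr \<alpha> * (3 * real n + \<alpha>) * (2 / t)^(i+1) \<le> (1 + 2 powr \<alpha> * (3 * real n + \<alpha>)) * (2 / t)^(i+1)"
    using one by (simp add: algebra_simps)
  also have "\<dots> \<le> (1 + 2 powr \<alpha> * (3 * real n + \<alpha>)) * (2^(n+1) / t^(i+1))"
    using p2 a by (intro mult_left_mono) auto
  finally show ?thesis by (simp add: t_def s_def)
qed

theorem lemma2p5:
  fixes \<alpha> :: real and n :: nat
  assumes "\<alpha> > 0"
  shows "\<exists>C>0. \<forall>(c :: nat \<Rightarrow> complex) (w :: complex).
           (\<forall>i\<le>n. c i \<noteq> 0) \<longrightarrow> norm w < 1 \<longrightarrow> norm w > 1/2 \<longrightarrow>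
           bloch_norm \<alpha> (\<lambda>z. \<Sum>i\<le>n. c i * fw \<alpha> w i z)
             \<ge> C * (\<Sum>i\<le>n. norm (c i) * bloch_norm \<alpha> (fw \<alpha> w i))"
proof -
  obtain M where M: "M > 0" and lag: "\<And>T::complex poly. degree T \<le> n \<Longrightarrow>
     (\<Sum>k\<le>n. norm (coeff T k)) \<le> M * (\<Sum>j\<le>n. norm (poly T (nd n j)))"
    using lagrange_equiv[of n] by blast
  define K0 where "K0 = (1 + 2 powr \<alpha> * (3 * real n + \<alpha>)) * 2^(n+1)"
  define A where "A = (real n + 1) * K0 * 2^n * (M / \<alpha>) * (real n + 1) * (8/3 * 2 powr \<alpha>)"
  have K0: "K0 > 0" unfolding K0_def using assms by (intro mult_pos_pos add_pos_nonneg) auto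
  have A: "A > 0" unfolding A_def using K0 M assms by auto
  show ?thesis
  proof (intro exI[of _ "1 / A"] conjI allI impI)
    show "0 < 1 / A" using A by simp
    fix c :: "nat \<Rightarrow> complex" and w :: complex
    assume w2: "norm w < 1" and w1: "1/2 < norm w"
    define s where "s = norm w"
    define t where "t = 1 - s^2"
    define G where "G = bloch_norm \<alpha> (\<lambda>z. \<Sum>i\<le>n. c i * fw \<alpha> w i z)"
    define R where "R = Rp c n w t"
    define T where "T = Tp \<alpha> R"
    define \<Sigma>r where "\<Sigma>r = (\<Sum>k\<le>n. norm (coeff R k))"
    have s: "1/2 < s" "s < 1" using w1 w2 by (auto simp: s_def)
    have w0: "w \<noteq> 0" using s s_def by auto
    have t0: "0 < t" "t \<le> 1"
    proof -
      have "s * s < 1 * 1" using s by (intro mult_strict_mono) auto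
      thus "0 < t" by (simp add: t_def power2_eq_square)
      show "t \<le> 1" by (simp add: t_def)
    qed
    have low: "3/8 * 2 powr (-\<alpha>) * norm (poly T (nd n j)) / t \<le> G" if "j \<le> n" for j
      using lower_point[OF assms w1 w2 that, of c] by (simp add: G_def T_def R_def t_def s_def)
    have low2: "norm (poly T (nd n j)) \<le> (8/3 * 2 powr \<alpha>) * t * G" if "j \<le> n" for j
    proof -
      have "3/8 * 2 powr (-\<alpha>) * norm (poly T (nd n j)) \<le> G * t" using low[OF that] t0 by (simp add: divide_le_eq)
      hence "(8/3 * 2 powr \<alpha>) * (3/8 * 2 powr (-\<alpha>) * norm (poly T (nd n j))) \<le> (8/3 * 2 powr \<alpha>) * (G * t)"
        by (intro mult_left_mono) auto
      moreover have "2 powr \<alpha> * 2 powr (-\<alpha>) = 1" by (simp add: powr_add[symmetric])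
      ultimately show ?thesis by (simp add: mult_ac)
    qed
    have dT: "degree T \<le> n" unfolding T_def R_def by (intro degree_Tp degree_Rp)
    have "\<alpha> * \<Sigma>r \<le> (\<Sum>k\<le>n. norm (coeff T k))"
      unfolding \<Sigma>r_def sum_distrib_left
    proof (intro sum_mono)
      fix k assume "k \<in> {..n}"
      have "norm (coeff T k) = norm (complex_of_real (\<alpha> + real k)) * norm (coeff R k)"
        unfolding T_def coeff_Tp norm_mult by simp
      also have "norm (complex_of_real (\<alpha> + real k)) = \<alpha> + real k" using assms by (simp only: norm_of_real)
      finally show "\<alpha> * norm (coeff R k) \<le> norm (coeff T k)" by (simp add: algebra_simps)
    qed
    also have "\<dots> \<le> M * (\<Sum>j\<le>n. norm (poly T (nd n j)))" by (rule lag[OF dT])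
    also have "\<dots> \<le> M * (\<Sum>j\<le>n. (8/3 * 2 powr \<alpha>) * t * G)"
      using M low2 by (intro mult_left_mono sum_mono) auto
    also have "\<dots> = M * ((real n + 1) * ((8/3 * 2 powr \<alpha>) * t * G))" by (simp add: add.commute)
    finally have sr: "\<alpha> * \<Sigma>r \<le> M * ((real n + 1) * ((8/3 * 2 powr \<alpha>) * t * G))" .
    have ci: "norm (c i) * bloch_norm \<alpha> (fw \<alpha> w i) \<le> K0 * 2^n * \<Sigma>r / t" if "i \<le> n" for i
    proof -
      have cb: "norm (c i) \<le> t^i * 2^n * \<Sigma>r"
        unfolding \<Sigma>r_def R_def using coeff_bound[OF w0 _ t0 that, of c] w2 by simp
      have U0: "0 \<le> K0 / t^(i+1)" using K0 t0 by simp
      have "norm (c i) * bloch_norm \<alpha> (fw \<alpha> w i) \<le> norm (c i) * (K0 / t^(i+1))"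
        using upper_fw[OF assms w1 w2 that] by (intro mult_left_mono) (auto simp: K0_def t_def s_def)
      also have "\<dots> \<le> (t^i * 2^n * \<Sigma>r) * (K0 / t^(i+1))"
        using cb U0 by (intro mult_right_mono) auto
      also have "\<dots> = K0 * 2^n * \<Sigma>r / t" using t0 by (simp add: field_simps)
      finally show ?thesis .
    qed
    have "(\<Sum>i\<le>n. norm (c i) * bloch_norm \<alpha> (fw \<alpha> w i)) \<le> (\<Sum>i\<le>n. K0 * 2^n * \<Sigma>r / t)"
      using ci by (intro sum_mono) auto
    also have "\<dots> = (real n + 1) * K0 * 2^n * \<Sigma>r / t" by simp
    also have "\<dots> \<le> A * G"
    proof -
      have "\<Sigma>r \<le> (M / \<alpha>) * ((real n + 1) * ((8/3 * 2 powr \<alpha>) * t * G))"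
        using sr assms by (simp add: field_simps)
      hence "(real n + 1) * K0 * 2^n * \<Sigma>r \<le> (real n + 1) * K0 * 2^n * ((M / \<alpha>) * ((real n + 1) * ((8/3 * 2 powr \<alpha>) * t * G)))"
        using K0 by (intro mult_left_mono) auto
      also have "\<dots> = A * G * t" by (simp add: A_def mult_ac)
      finally show ?thesis using t0 by (simp add: divide_le_eq)
    qed
    finally have "(\<Sum>i\<le>n. norm (c i) * bloch_norm \<alpha> (fw \<alpha> w i)) \<le> A * G" .
    thus "1 / A * (\<Sum>i\<le>n. norm (c i) * bloch_norm \<alpha> (fw \<alpha> w i)) \<le> bloch_norm \<alpha> (\<lambda>z. \<Sum>i\<le>n. c i * fw \<alpha> w i z)"
      using A by (simp add: G_def field_simps)
  qed
qed

end
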